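(* Let $(V,g)$ be a three-dimensional Lorentzian vector space (signature $(-,+,+)$) with a choice of time orientation, and let $F\in\mathrm{Skew}(V)$, $F\neq0$. Set $\sigma:=-\frac12\mathrm{Tr}(F^2)\in\mathbb{R}$. Then there exists an orthonormal basis $\{e_0,e_1,e_2\}$ of $V$ with $e_0$ timelike and future directed such that $$F(e_0)=\left(-1+\tfrac{\sigma}{4}\right)e_2,\quad F(e_1)=-\left(1+\tfrac{\sigma}{4}\right)e_2,\quad F(e_2)=\left(-1+\tfrac{\sigma}{4}\right)e_0+\left(1+\tfrac{\sigma}{4}\right)e_1.$$
   Context: $\mathrm{Skew}(V)$ denotes the set of endomorphisms $F:V\to V$ with $\langle e,F(e')\rangle=-\langle F(e),e'\rangle$ for all $e,e'\in V$, where $\langle\cdot,\cdot\rangle$ is the inner product of $g$. *)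

theory Defs
  imports "HOL-Analysis.Analysis"
begin

definition orthonormal_frame :: "(real^3 \<Rightarrow> real^3 \<Rightarrow> real) \<Rightarrow> real^3 \<Rightarrow> real^3 \<Rightarrow> real^3 \<Rightarrow> bool" where
  "orthonormal_frame g e0 e1 e2 \<longleftrightarrow>
     independent {e0, e1, e2} \<and> span {e0, e1, e2} = UNIV \<and> e0 \<noteq> e1 \<and> e0 \<noteq> e2 \<and> e1 \<noteq> e2 \<and>
     g e0 e0 = -1 \<and> g e1 e1 = 1 \<and> g e2 e2 = 1 \<and>
     g e0 e1 = 0 \<and> g e0 e2 = 0 \<and> g e1 e2 = 0"

definition lorentzian_metric :: "(real^3 \<Rightarrow> real^3 \<Rightarrow> real) \<Rightarrow> bool" where
  "lorentzian_metric g \<longleftrightarrow> bilinear g \<and> (\<forall>x y. g x y = g y x) \<and>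
     (\<exists>b0 b1 b2. orthonormal_frame g b0 b1 b2)"

text \<open>Time orientation: a fixed timelike vector tau; a timelike v is future directed iff g v tau < 0.\<close>
definition timelike :: "(real^3 \<Rightarrow> real^3 \<Rightarrow> real) \<Rightarrow> real^3 \<Rightarrow> bool" where
  "timelike g v \<longleftrightarrow> g v v < 0"

definition future_directed :: "(real^3 \<Rightarrow> real^3 \<Rightarrow> real) \<Rightarrow> real^3 \<Rightarrow> real^3 \<Rightarrow> bool" where
  "future_directed g tau v \<longleftrightarrow> timelike g v \<and> g v tau < 0"

definition Skew :: "(real^3 \<Rightarrow> real^3 \<Rightarrow> real) \<Rightarrow> (real^3 \<Rightarrow> real^3) set" where
  "Skew g = {F. linear F \<and> (\<forall>e e'. g e (F e') = - g (F e) e')}"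

definition trace_map :: "(real^3 \<Rightarrow> real^3) \<Rightarrow> real" where
  "trace_map f = trace (matrix f)"

end

theory Submission
  imports Defs
begin


lemmas bil = bilinear_ladd bilinear_radd bilinear_lmul bilinear_rmul bilinear_lneg bilinear_rneg

lemma gsum:
  assumes B: "bilinear g" and S: "\<forall>x y. g x y = g y x"
    and "g e0 e0 = -1" "g e1 e1 = 1" "g e2 e2 = 1" "g e0 e1 = 0" "g e0 e2 = 0" "g e1 e2 = 0"
  shows "g (x *\<^sub>R e0 + y *\<^sub>R e1 + z *\<^sub>R e2) (x' *\<^sub>R e0 + y' *\<^sub>R e1 + z' *\<^sub>R e2)
     = - x * x' + y * y' + z * z'"
proof -
  have "g e1 e0 = 0" "g e2 e0 = 0" "g e2 e1 = 0" using assms by metis+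
  then show ?thesis using assms by (simp add: bil[OF B] algebra_simps)
qed

lemma onf_intro:
  assumes B: "bilinear g" and S: "\<forall>x y. g x y = g y x"
    and h: "g e0 e0 = -1" "g e1 e1 = 1" "g e2 e2 = 1" "g e0 e1 = 0" "g e0 e2 = 0" "g e1 e2 = 0"
  shows "orthonormal_frame g e0 e1 e2"
proof -
  have h2: "g e1 e0 = 0" "g e2 e0 = 0" "g e2 e1 = 0" using h S by metis+
  have d: "e0 \<noteq> e1" "e0 \<noteq> e2" "e1 \<noteq> e2" using h by auto
  have ind: "independent {e0, e1, e2}"
  proof
    assume "dependent {e0, e1, e2}"
    then obtain u where u: "\<exists>v\<in>{e0,e1,e2}. u v \<noteq> 0" "(\<Sum>v\<in>{e0,e1,e2}. u v *\<^sub>R v) = 0"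
      using real_vector.dependent_finite[of "{e0,e1,e2}"] by auto
    have s: "u e0 *\<^sub>R e0 + u e1 *\<^sub>R e1 + u e2 *\<^sub>R e2 = 0" using u(2) d by (simp add: add.assoc)
    have "g (u e0 *\<^sub>R e0 + u e1 *\<^sub>R e1 + u e2 *\<^sub>R e2) e0 = 0"
         "g (u e0 *\<^sub>R e0 + u e1 *\<^sub>R e1 + u e2 *\<^sub>R e2) e1 = 0"
         "g (u e0 *\<^sub>R e0 + u e1 *\<^sub>R e1 + u e2 *\<^sub>R e2) e2 = 0"
      unfolding s using bilinear_lzero[OF B] by auto
    then have "u e0 = 0" "u e1 = 0" "u e2 = 0" using h h2 by (simp_all add: bil[OF B])
    then show False using u(1) by auto
  qed
  have c: "card {e0, e1, e2} = 3" using d by simp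
  have "UNIV \<subseteq> span {e0, e1, e2}"
    using card_eq_dim[of "{e0,e1,e2}" UNIV] ind c by simp
  then show ?thesis unfolding orthonormal_frame_def using ind d h by auto
qed

lemma expand:
  assumes B: "bilinear g" and S: "\<forall>x y. g x y = g y x"
    and O: "orthonormal_frame g e0 e1 e2"
  shows "v = (- g v e0) *\<^sub>R e0 + (g v e1) *\<^sub>R e1 + (g v e2) *\<^sub>R e2"
proof -
  have d: "e0 \<noteq> e1" "e0 \<noteq> e2" "e1 \<noteq> e2" and h: "g e0 e0 = -1" "g e1 e1 = 1" "g e2 e2 = 1" "g e0 e1 = 0" "g e0 e2 = 0" "g e1 e2 = 0"
    and sp: "span {e0,e1,e2} = UNIV"
    using O unfolding orthonormal_frame_def by auto
  have h2: "g e1 e0 = 0" "g e2 e0 = 0" "g e2 e1 = 0" using h S by metis+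
  have "v \<in> span {e0,e1,e2}" using sp by auto
  then obtain u where "v = (\<Sum>w\<in>{e0,e1,e2}. u w *\<^sub>R w)"
    using real_vector.span_finite[of "{e0,e1,e2}"] by auto
  then have v: "v = u e0 *\<^sub>R e0 + u e1 *\<^sub>R e1 + u e2 *\<^sub>R e2" using d by (simp add: add.assoc)
  show ?thesis unfolding v using h h2 by (simp add: bil[OF B])
qed

lemma timelike_nonorth:
  assumes B: "bilinear g" and S: "\<forall>x y. g x y = g y x"
    and O: "orthonormal_frame g e0 e1 e2" and T: "g v v < 0"
  shows "g e0 v \<noteq> 0"
proof
  assume z: "g e0 v = 0"
  have h: "g e0 e0 = -1" "g e1 e1 = 1" "g e2 e2 = 1" "g e0 e1 = 0" "g e0 e2 = 0" "g e1 e2 = 0"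
    using O unfolding orthonormal_frame_def by auto
  have "g v v = g ((- g v e0) *\<^sub>R e0 + (g v e1) *\<^sub>R e1 + (g v e2) *\<^sub>R e2) ((- g v e0) *\<^sub>R e0 + (g v e1) *\<^sub>R e1 + (g v e2) *\<^sub>R e2)"
    using expand[OF B S O, of v] by simp
  also have "\<dots> = - (g v e0 * g v e0) + g v e1 * g v e1 + g v e2 * g v e2"
    by (subst gsum[OF B S h]) simp
  finally have "g v v = g v e1 * g v e1 + g v e2 * g v e2" using z S by (metis add.left_neutral mult_zero_left neg_0_equal_iff_equal)
  then show False using T by (smt (verit) zero_le_square)
qed



lemma trace_frame:
  assumes B: "bilinear g" and S: "\<forall>x y. g x y = g y x"
    and O: "orthonormal_frame g b0 b1 b2" and lG: "linear G"
  shows "trace_map G = - g (G b0) b0 + g (G b1) b1 + g (G b2) b2"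
proof -
  have h: "g b0 b0 = -1" "g b1 b1 = 1" "g b2 b2 = 1" "g b0 b1 = 0" "g b0 b2 = 0" "g b1 b2 = 0"
    using O unfolding orthonormal_frame_def by auto
  define C where "C v = (vector [- g v b0, g v b1, g v b2] :: real^3)" for v
  define Lm where "Lm c = c$1 *\<^sub>R b0 + c$2 *\<^sub>R b1 + c$3 *\<^sub>R b2" for c :: "real^3"
  have lC: "linear C"
    by (rule linearI) (simp_all add: C_def vec_eq_iff forall_3 bil[OF B] algebra_simps)
  have lL: "linear Lm"
    by (rule linearI) (simp_all add: Lm_def algebra_simps)
  have LC: "Lm (C v) = v" for v
    using expand[OF B S O, of v] by (simp add: Lm_def C_def)
  have "G = Lm \<circ> (C \<circ> G)" using LC by (simp add: fun_eq_iff)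
  then have "matrix G = matrix Lm ** matrix (C \<circ> G)"
    by (metis lC lG lL linear_compose matrix_compose)
  then have "trace (matrix G) = trace (matrix (C \<circ> G) ** matrix Lm)"
    by (simp only: trace_mul_sym[of "matrix Lm"])
  also have "\<dots> = trace (matrix (C \<circ> G \<circ> Lm))"
    by (metis lC lG lL linear_compose matrix_compose)
  also have "\<dots> = - g (G b0) b0 + g (G b1) b1 + g (G b2) b2"
    by (simp add: trace_def sum_3 matrix_def Lm_def C_def axis_def)
  finally show ?thesis unfolding trace_map_def .
qed



lemma choose_rot:
  fixes p q r :: real
  assumes "\<not> (p = 0 \<and> q = 0 \<and> r = 0)"
  shows "\<exists>(co::real) (si::real) (t::real). co * co + si * si = 1 \<and> p = - si * t \<and> q = co * t \<and> t + r \<noteq> 0"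
proof (cases "p = 0 \<and> q = 0")
  case True
  then show ?thesis using assms by (intro exI[of _ 1] exI[of _ 0] exI[of _ 0]) auto
next
  case False
  define s where "s = sqrt (p * p + q * q)"
  have pos: "p * p + q * q > 0" using False
    by (metis add_pos_nonneg add_nonneg_pos not_real_square_gt_zero zero_le_square)
  have sp: "s > 0" using pos unfolding s_def by simp
  have ss: "s * s = p * p + q * q" unfolding s_def using pos by simp
  define e :: real where "e = (if r \<ge> 0 then 1 else -1)"
  have ee: "e * e = 1" unfolding e_def by auto
  show ?thesis
  proof (intro exI conjI)
    show "(e * q / s) * (e * q / s) + (- e * p / s) * (- e * p / s) = 1"
    proof -
      have "(e * q / s) * (e * q / s) + (- e * p / s) * (- e * p / s) = (e * e) * (p * p + q * q) / (s * s)"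
        using sp by (simp add: field_simps)
      then show ?thesis using ee ss sp pos False by simp
    qed
    show "p = - (- e * p / s) * (e * s)" using sp ee by (simp add: field_simps)
    show "q = (e * q / s) * (e * s)" using sp ee by (simp add: field_simps)
    show "e * s + r \<noteq> 0" using sp unfolding e_def by auto
  qed
qed



lemma comb_eq:
  fixes b0 b1 b2 :: "'a::real_vector"
  shows "x = x' \<Longrightarrow> y = y' \<Longrightarrow> z = z' \<Longrightarrow> x *\<^sub>R b0 + y *\<^sub>R b1 + z *\<^sub>R b2 = x' *\<^sub>R b0 + y' *\<^sub>R b1 + z' *\<^sub>R b2"
  by simp

lemma comb_scale:
  fixes b0 b1 b2 :: "'a::real_vector"
  shows "c *\<^sub>R (x *\<^sub>R b0 + y *\<^sub>R b1 + z *\<^sub>R b2) = (c * x) *\<^sub>R b0 + (c * y) *\<^sub>R b1 + (c * z) *\<^sub>R b2"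
  by (simp add: scaleR_add_right)

lemma comb_add:
  fixes b0 b1 b2 :: "'a::real_vector"
  shows "(x *\<^sub>R b0 + y *\<^sub>R b1 + z *\<^sub>R b2) + (x' *\<^sub>R b0 + y' *\<^sub>R b1 + z' *\<^sub>R b2) = (x + x') *\<^sub>R b0 + (y + y') *\<^sub>R b1 + (z + z') *\<^sub>R b2"
  by (simp add: algebra_simps)

lemma scal_ids0:
  fixes t u :: real
  assumes u: "u \<noteq> 0"
  shows "t * (- (1/u + u/4)) + (u - t) * (- 1/u + u/4) = -1 + ((u - t) * (u - t) - t * t) / 4"
    "t * (- 1/u + u/4) + (u - t) * (- (1/u + u/4)) = - (1 + ((u - t) * (u - t) - t * t) / 4)"
    "(-1 + ((u - t) * (u - t) - t * t) / 4) * (- (1/u + u/4)) + (1 + ((u - t) * (u - t) - t * t) / 4) * (- 1/u + u/4) = t"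
    "(-1 + ((u - t) * (u - t) - t * t) / 4) * (- 1/u + u/4) + (1 + ((u - t) * (u - t) - t * t) / 4) * (- (1/u + u/4)) = - (u - t)"
    "(- (1/u + u/4)) * (- (1/u + u/4)) - (- 1/u + u/4) * (- 1/u + u/4) = 1"
  using u by (simp_all add: field_simps)

lemma scal_ids:
  fixes t r :: real
  assumes "t + r \<noteq> 0"
  defines "ch \<equiv> - (1 / (t + r) + (t + r) / 4)" and "sh \<equiv> - 1 / (t + r) + (t + r) / 4"
  defines "a \<equiv> -1 + (r * r - t * t) / 4" and "bb \<equiv> 1 + (r * r - t * t) / 4"
  shows "t * ch + r * sh = a" "t * sh + r * ch = - bb" "a * ch + bb * sh = t" "a * sh + bb * ch = - r"
    "ch * ch - sh * sh = 1"
  using scal_ids0(1-4)[where u="t + r" and t=t] scal_ids0(5)[where u="t + r"] assms(1) unfolding ch_def sh_def a_def bb_def by simp_all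



theorem corollary2p3:
  fixes g :: "real^3 \<Rightarrow> real^3 \<Rightarrow> real" and tau :: "real^3" and F :: "real^3 \<Rightarrow> real^3"
  assumes "lorentzian_metric g"
    and "timelike g tau"
    and "F \<in> Skew g" and "F \<noteq> (\<lambda>x. 0)"
  shows "let \<sigma> = - (1/2) * trace_map (F \<circ> F) in
    \<exists>e0 e1 e2. orthonormal_frame g e0 e1 e2 \<and> future_directed g tau e0 \<and>
      F e0 = (-1 + \<sigma>/4) *\<^sub>R e2 \<and>
      F e1 = - ((1 + \<sigma>/4) *\<^sub>R e2) \<and>
      F e2 = (-1 + \<sigma>/4) *\<^sub>R e0 + (1 + \<sigma>/4) *\<^sub>R e1"
proof -
  have B: "bilinear g" and S: "\<forall>x y. g x y = g y x" and "\<exists>b0 b1 b2. orthonormal_frame g b0 b1 b2"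
    using assms(1) unfolding lorentzian_metric_def by auto
  then obtain b0 b1 b2 where O: "orthonormal_frame g b0 b1 b2" by auto
  have h: "g b0 b0 = -1" "g b1 b1 = 1" "g b2 b2 = 1" "g b0 b1 = 0" "g b0 b2 = 0" "g b1 b2 = 0"
    using O unfolding orthonormal_frame_def by auto
  have lF: "linear F" and sk: "\<And>e e'. g e (F e') = - g (F e) e'"
    using assms(3) unfolding Skew_def by auto
  define p where "p = g (F b0) b1"
  define q where "q = g (F b0) b2"
  define r where "r = g (F b1) b2"
  have diag0: "g (F v) v = 0" for v using sk[of v v] S[rule_format, of v "F v"] by linarith
  have Fb0: "F b0 = 0 *\<^sub>R b0 + p *\<^sub>R b1 + q *\<^sub>R b2"
    using expand[OF B S O, of "F b0"] diag0[of b0] unfolding p_def q_def by simp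
  have Fb1: "F b1 = p *\<^sub>R b0 + 0 *\<^sub>R b1 + r *\<^sub>R b2"
  proof -
    have "- g (F b1) b0 = p" using sk[of b0 b1] S[rule_format, of "F b1" b0] unfolding p_def by linarith
    then show ?thesis using expand[OF B S O, of "F b1"] diag0[of b1] unfolding r_def by simp
  qed
  have Fb2: "F b2 = q *\<^sub>R b0 + (- r) *\<^sub>R b1 + 0 *\<^sub>R b2"
  proof -
    have "- g (F b2) b0 = q" using sk[of b0 b2] S[rule_format, of "F b2" b0] unfolding q_def by linarith
    moreover have "g (F b2) b1 = - r" using sk[of b1 b2] S[rule_format, of "F b2" b1] unfolding r_def by linarith
    ultimately show ?thesis using expand[OF B S O, of "F b2"] diag0[of b2] by simp
  qed
  have FL: "F (x *\<^sub>R b0 + y *\<^sub>R b1 + z *\<^sub>R b2) = (p * y + q * z) *\<^sub>R b0 + (p * x - r * z) *\<^sub>R b1 + (q * x + r * y) *\<^sub>R b2" for x y z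
    by (simp add: linear_add[OF lF] linear_scale[OF lF] Fb0 Fb1 Fb2 algebra_simps)
  have nz: "\<not> (p = 0 \<and> q = 0 \<and> r = 0)"
  proof
    assume z: "p = 0 \<and> q = 0 \<and> r = 0"
    have "F v = 0" for v
      using FL[of "- g v b0" "g v b1" "g v b2"] expand[OF B S O, of v] z by simp
    then show False using assms(4) by auto
  qed
  have gF: "g (F (F v)) v = - g (F v) (F v)" for v using sk[of "F v" v] by simp
  have tr: "trace_map (F \<circ> F) = 2 * (p * p + q * q - r * r)"
  proof -
    have "trace_map (F \<circ> F) = - g (F (F b0)) b0 + g (F (F b1)) b1 + g (F (F b2)) b2"
      using trace_frame[OF B S O linear_compose[OF lF lF]] by simp
    also have "\<dots> = g (F b0) (F b0) - g (F b1) (F b1) - g (F b2) (F b2)" using gF by simp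
    also have "\<dots> = 2 * (p * p + q * q - r * r)"
      unfolding Fb0 Fb1 Fb2 gsum[OF B S h] by simp
    finally show ?thesis .
  qed
  obtain co si t where cs: "co * co + si * si = 1" and pt: "p = - si * t" and qt: "q = co * t" and tr0: "t + r \<noteq> 0"
    using choose_rot[OF nz] by blast
  define sig where "sig = - (1/2) * trace_map (F \<circ> F)"
  have sig: "sig = r * r - t * t"
  proof -
    have "sig = r * r - (p * p + q * q)" unfolding sig_def tr by (simp add: field_simps)
    also have "p * p + q * q = t * t * (co * co + si * si)" unfolding pt qt by (simp add: algebra_simps)
    finally show ?thesis using cs by simp
  qed
  define ch where "ch = - (1 / (t + r) + (t + r) / 4)"
  define sh where "sh = - 1 / (t + r) + (t + r) / 4"
  define a where "a = -1 + sig / 4"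
  define bb where "bb = 1 + sig / 4"
  have k: "t * ch + r * sh = a" "t * sh + r * ch = - bb" "a * ch + bb * sh = t" "a * sh + bb * ch = - r"
    "ch * ch - sh * sh = 1"
    using scal_ids[OF tr0] unfolding ch_def sh_def a_def bb_def sig by simp_all
  define e0 where "e0 = ch *\<^sub>R b0 + (sh * co) *\<^sub>R b1 + (sh * si) *\<^sub>R b2"
  define e1 where "e1 = sh *\<^sub>R b0 + (ch * co) *\<^sub>R b1 + (ch * si) *\<^sub>R b2"
  define e2 where "e2 = 0 *\<^sub>R b0 + (- si) *\<^sub>R b1 + co *\<^sub>R b2"
  have ge: "g e0 e0 = -1" "g e1 e1 = 1" "g e2 e2 = 1" "g e0 e1 = 0" "g e0 e2 = 0" "g e1 e2 = 0"
    unfolding e0_def e1_def e2_def gsum[OF B S h]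
    using cs k(5) by algebra+
  have Oe: "orthonormal_frame g e0 e1 e2" by (rule onf_intro[OF B S ge])
  have F0: "F e0 = a *\<^sub>R e2"
  proof -
    have c: "p * (sh * co) + q * (sh * si) = a * 0" "p * ch - r * (sh * si) = a * (- si)"
      "q * ch + r * (sh * co) = a * co"
      unfolding pt qt k(1)[symmetric] by algebra+
    show ?thesis unfolding e0_def FL e2_def comb_scale
      by (rule comb_eq) (use c in simp_all)
  qed
  have F1: "F e1 = - (bb *\<^sub>R e2)"
  proof -
    have kb: "bb = - (t * sh + r * ch)" using k(2) by simp
    have c: "p * (ch * co) + q * (ch * si) = - bb * 0" "p * sh - r * (ch * si) = - bb * (- si)"
      "q * sh + r * (ch * co) = - bb * co"
      unfolding pt qt kb by algebra+
    have "F e1 = (- bb) *\<^sub>R e2" unfolding e1_def FL e2_def comb_scale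
      by (rule comb_eq) (use c in simp_all)
    then show ?thesis by simp
  qed
  have F2: "F e2 = a *\<^sub>R e0 + bb *\<^sub>R e1"
  proof -
    have c0: "p * (- si) + q * co = a * ch + bb * sh"
    proof -
      have "p * (- si) + q * co = t * (co * co + si * si)" unfolding pt qt by algebra
      then show ?thesis using cs k(3) by simp
    qed
    have c1: "p * 0 - r * co = a * (sh * co) + bb * (ch * co)"
    proof -
      have "a * (sh * co) + bb * (ch * co) = co * (a * sh + bb * ch)" by algebra
      then show ?thesis using k(4) by simp
    qed
    have c2: "q * 0 + r * (- si) = a * (sh * si) + bb * (ch * si)"
    proof -
      have "a * (sh * si) + bb * (ch * si) = si * (a * sh + bb * ch)" by algebra
      then show ?thesis using k(4) by simp
    qed
    show ?thesis unfolding e0_def e1_def FL e2_def comb_scale comb_add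
      by (rule comb_eq) (use c0 c1 c2 in simp_all)
  qed
  have nt: "g e0 tau \<noteq> 0"
    using timelike_nonorth[OF B S Oe] assms(2) unfolding timelike_def by blast
  have Fn: "F (- x) = - F x" for x using linear_neg[OF lF] by blast
  have "\<exists>e0 e1 e2. orthonormal_frame g e0 e1 e2 \<and> future_directed g tau e0 \<and>
      F e0 = a *\<^sub>R e2 \<and> F e1 = - (bb *\<^sub>R e2) \<and> F e2 = a *\<^sub>R e0 + bb *\<^sub>R e1"
  proof (cases "g e0 tau < 0")
    case True
    show ?thesis
      by (intro exI[of _ e0] exI[of _ e1] exI[of _ e2])
        (use Oe F0 F1 F2 True ge(1) in \<open>auto simp: future_directed_def timelike_def\<close>)
  next
    case False
    then have pos: "g e0 tau > 0" using nt by linarith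
    have Oe': "orthonormal_frame g (- e0) (- e1) (- e2)"
      by (rule onf_intro[OF B S]) (simp_all add: bilinear_lneg[OF B] bilinear_rneg[OF B] ge)
    show ?thesis
      by (intro exI[of _ "- e0"] exI[of _ "- e1"] exI[of _ "- e2"])
        (use Oe' F0 F1 F2 pos ge(1) in \<open>auto simp: future_directed_def timelike_def Fn bilinear_lneg[OF B] bilinear_rneg[OF B]\<close>)
  qed
  then show ?thesis unfolding Let_def a_def bb_def sig_def by simp
qed
end
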